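(* Fix a cell $c$ and let ${\cal L}_c:\mathbb{R}\times\mathbb{R}^{n_c}\to\mathbb{R}^{n_c}$ be a linear map (the constitutive relation ${\bf u}_c={\cal L}_c(p_c,{\bm\lambda}_c)$ of a mixed-hybrid scheme). Assume ${\cal L}_c$ is linearity preserving: for every affine function $q({\bf x})=a+{\bf g}\cdot{\bf x}$ ($a\in\mathbb{R}$, ${\bf g}\in\mathbb{R}^d$), $$ {\cal L}_c\big(q({\bf x}_c),(q({\bf x}_f))_{f\in\partial c}\big)=\big(-{\bf n}_f\cdot{\mathbb K}_c{\bf g}\big)_{f\in\partial c}. $$ Then: (i) there exists an $n_c\times n_c$ matrix ${\mathsf W}_{{\cal F},c}$ such that ${\cal L}_c(p_c,{\bm\lambda}_c)={\mathsf W}_{{\cal F},c}{\mathsf F}_c\Sigma_c(p_c\mathbb{1}-{\bm\lambda}_c)$ for all $(p_c,{\bm\lambda}_c)$, and ${\mathsf W}_{{\cal F},c}{\mathsf R}_c={\mathsf N}_c$ (i.e. the scheme belongs to the extended mixed-hybrid family); (ii) if moreover the bilinear form ${\cal B}((\tilde p_c,\tilde{\bm\lambda}_c),(p_c,{\bm\lambda}_c)):=(\tilde p_c\mathbb{1}-\tilde{\bm\lambda}_c)^T\Sigma_c{\mathsf F}_c\,{\cal L}_c(p_c,{\bm\lambda}_c)$ is symmetric and satisfies ${\cal B}((p_c,{\bm\lambda}_c),(p_c,{\bm\lambda}_c))>0$ whenever $p_c\mathbb{1}\neq{\bm\lambda}_c$, then ${\mathsf W}_{{\cal F},c}$ is symmetric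 positive definite and ${\mathsf M}_{{\cal F},c}:={\mathsf W}_{{\cal F},c}^{-1}$ is symmetric positive definite with ${\mathsf M}_{{\cal F},c}{\mathsf N}_c={\mathsf R}_c$ (a member of the mimetic family); and if in addition there are constants $0<C_1\le C_2$ with $C_1|c|\,\|{\bf u}\|^2\le{\cal B}((p_c,{\bm\lambda}_c),(p_c,{\bm\lambda}_c))\le C_2|c|\,\|{\bf u}\|^2$ for all $(p_c,{\bm\lambda}_c)$, where ${\bf u}={\cal L}_c(p_c,{\bm\lambda}_c)$ and $\|\cdot\|$ is the Euclidean norm, then $C_1|c|\,\|{\bf v}\|^2\le{\bf v}^T{\mathsf M}_{{\cal F},c}{\bf v}\le C_2|c|\,\|{\bf v}\|^2$ for all ${\bf v}\in\mathbb{R}^{n_c}$.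
   Context: $c\subset\mathbb{R}^d$ ($d=2,3$) is a polygonal/polyhedral cell with $n_c$ flat faces $f$, centroid ${\bf x}_c$, face centroids ${\bf x}_f$, face measures $|f|$, cell measure $|c|$. Each face has a fixed unit normal ${\bf n}_f$; ${\bf n}_{c,f}$ is the exterior unit normal and $\sigma_{c,f}={\bf n}_f\cdot{\bf n}_{c,f}\in\{\pm1\}$. ${\mathbb K}_c$ is a constant symmetric positive definite $d\times d$ tensor. ${\mathsf F}_c=\mathrm{diag}(|f|)_{f\in\partial c}$, $\Sigma_c=\mathrm{diag}(\sigma_{c,f})_{f\in\partial c}$, $\mathbb{1}=(1,\dots,1)^T\in\mathbb{R}^{n_c}$. ${\mathsf N}_c$ and ${\mathsf R}_c$ are the $n_c\times d$ matrices with entries $({\mathsf N}_c)_{f,i}={\bf n}_f\cdot{\mathbb K}_c{\bf e}_i$ and $({\mathsf R}_c)_{f,i}=\sigma_{c,f}|f|\,(x_{f,i}-x_{c,i})$, where ${\bf e}_i$ is the $i$-th coordinate vector and $x_{f,i},x_{c,i}$ are the $i$-th coordinates of ${\bf x}_f,{\bf x}_c$. *)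

theory Defs
  imports "HOL-Analysis.Analysis"
begin

definition diag_mat :: "('n::finite \<Rightarrow> real) \<Rightarrow> real^'n^'n" where
  "diag_mat a = (\<chi> i j. if i = j then a i else 0)"

definition spd :: "real^'n::finite^'n \<Rightarrow> bool" where
  "spd A \<longleftrightarrow> transpose A = A \<and> (\<forall>v. v \<noteq> 0 \<longrightarrow> v \<bullet> (A *v v) > 0)"

definition Nmat :: "('f::finite \<Rightarrow> real^'d::finite) \<Rightarrow> real^'d^'d \<Rightarrow> real^'d^'f" where
  "Nmat n K = (\<chi> f i. n f \<bullet> (K *v axis i 1))"

definition Rmat :: "('f::finite \<Rightarrow> real) \<Rightarrow> ('f \<Rightarrow> real) \<Rightarrow> ('f \<Rightarrow> real^'d::finite)
                    \<Rightarrow> real^'d \<Rightarrow> real^'d^'f" where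
  "Rmat \<sigma> fm xf xc = (\<chi> f i. \<sigma> f * fm f * (xf f $ i - xc $ i))"

definition Bform :: "('f::finite \<Rightarrow> real) \<Rightarrow> ('f \<Rightarrow> real) \<Rightarrow> (real \<times> (real^'f) \<Rightarrow> real^'f)
                     \<Rightarrow> real \<times> (real^'f) \<Rightarrow> real \<times> (real^'f) \<Rightarrow> real" where
  "Bform \<sigma> fm L y x = ((vec (fst y) - snd y) v* (diag_mat \<sigma> ** diag_mat fm)) \<bullet> L x"

end

theory Submission imports Defs begin

lemma ite_mult0: "(if P then a else (0::real)) * b = (if P then a * b else 0)" by simp

lemma diag_mult: "diag_mat a *v v = (\<chi> i. a i * v $ i)"
  by (simp add: diag_mat_def matrix_vector_mult_def vec_eq_iff ite_mult0)

lemma diag_diag: "diag_mat a ** diag_mat b = diag_mat (\<lambda>i. a i * b i)"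
  by (auto simp add: diag_mat_def matrix_matrix_mult_def vec_eq_iff ite_mult0)

lemma mult_ite0: "b * (if P then a else (0::real)) = (if P then b * a else 0)" by simp

lemma vdiag: "x v* diag_mat a = (\<chi> i. x $ i * a i)"
  by (simp add: diag_mat_def vector_matrix_mult_def vec_eq_iff mult_ite0)

lemma Nmat_rows: "Nmat n K = (\<chi> f. n f v* K)"
proof -
  have "(n f v* K) $ i = n f \<bullet> (K *v axis i 1)" for f i
    using dot_lmul_matrix[of "n f" K "axis i 1"] by (simp add: inner_axis)
  then show ?thesis by (simp add: Nmat_def vec_eq_iff)
qed

lemma mv_row: "(A *v x) $ i = (A $ i) \<bullet> (x::real^'n)"
  by (simp add: matrix_vector_mult_def inner_vec_def mult.commute)

lemma Nmat_mult: "Nmat n K *v x = (\<chi> f. n f \<bullet> (K *v x))"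
  by (simp add: vec_eq_iff mv_row Nmat_rows dot_lmul_matrix)

lemma Rmat_mult: "Rmat \<sigma> fm xf xc *v x = (\<chi> f. \<sigma> f * fm f * ((xf f - xc) \<bullet> x))"
  by (simp add: Rmat_def matrix_vector_mult_def vec_eq_iff inner_vec_def
      sum_distrib_left algebra_simps sum_subtractf)

lemma mvneg: "(A::real^'n^'m) *v (- x) = - (A *v x)"
  by (simp add: matrix_vector_mult_def vec_eq_iff sum_negf)

lemma matrix_works_real: "linear f \<Longrightarrow> matrix f *v x = f (x::real^'n)"
  by (metis matrix_vector_mul)

theorem mainTheorem2:
  fixes L :: "real \<times> (real^'f::finite) \<Rightarrow> real^'f"
    and xc :: "real^'d::finite" and xf :: "'f \<Rightarrow> real^'d"
    and n ncf :: "'f \<Rightarrow> real^'d" and \<sigma> fm :: "'f \<Rightarrow> real"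
    and cm :: real and K :: "real^'d^'d"
  assumes dim: "CARD('d) = 2 \<or> CARD('d) = 3"
    and unit_n: "\<And>f. norm (n f) = 1"
    and unit_ncf: "\<And>f. norm (ncf f) = 1"
    and sigma_def: "\<And>f. \<sigma> f = n f \<bullet> ncf f"
    and sigma_pm: "\<And>f. \<sigma> f = 1 \<or> \<sigma> f = -1"
    and fm_pos: "\<And>f. fm f > 0"
    and cm_pos: "cm > 0"
    and K_spd: "spd K"
    and lin: "linear L"
    and lin_pres: "\<And>a g. L (a + g \<bullet> xc, \<chi> f. a + g \<bullet> xf f) = (\<chi> f. - (n f \<bullet> (K *v g)))"
  shows "\<exists>W :: real^'f^'f.
           (\<forall>p l. L (p, l) = W *v ((diag_mat fm ** diag_mat \<sigma>) *v (vec p - l)))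
         \<and> W ** Rmat \<sigma> fm xf xc = Nmat n K
         \<and> ((\<forall>y x. Bform \<sigma> fm L y x = Bform \<sigma> fm L x y)
             \<and> (\<forall>p l. vec p \<noteq> l \<longrightarrow> Bform \<sigma> fm L (p, l) (p, l) > 0)
            \<longrightarrow> spd W \<and> spd (matrix_inv W)
                \<and> matrix_inv W ** Nmat n K = Rmat \<sigma> fm xf xc
                \<and> (\<forall>C1 C2. 0 < C1 \<and> C1 \<le> C2
                     \<and> (\<forall>p l. C1 * cm * (norm (L (p, l)))\<^sup>2 \<le> Bform \<sigma> fm L (p, l) (p, l)
                             \<and> Bform \<sigma> fm L (p, l) (p, l) \<le> C2 * cm * (norm (L (p, l)))\<^sup>2)
                   \<longrightarrow> (\<forall>v. C1 * cm * (norm v)\<^sup>2 \<le> v \<bullet> (matrix_inv W *v v)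
                            \<and> v \<bullet> (matrix_inv W *v v) \<le> C2 * cm * (norm v)\<^sup>2)))"
proof -
  define d where "d f = fm f * \<sigma> f" for f
  have dnz: "d f \<noteq> 0" for f using fm_pos[of f] sigma_pm[of f] by (auto simp: d_def)
  define D where "D = diag_mat fm ** diag_mat \<sigma>"
  have Dv: "D *v z = (\<chi> f. d f * z $ f)" for z by (simp add: D_def diag_diag diag_mult d_def)
  define Di where "Di z = (\<chi> f. z $ f / d f)" for z :: "real^'f"
  have DDi: "D *v Di z = z" for z using dnz by (simp add: Dv Di_def vec_eq_iff)
  have DiD: "Di (D *v z) = z" for z using dnz by (simp add: Dv Di_def vec_eq_iff)
  define g where "g z = L (0, - Di z)" for z
  have lg: "linear g"
  proof (rule linearI)
    fix x y :: "real^'f" and c :: real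
    have "(0::real, - Di (x + y)) = (0, - Di x) + (0, - Di y)"
      by (simp add: Di_def vec_eq_iff add_divide_distrib)
    then have "g (x + y) = L ((0, - Di x) + (0, - Di y))"
      by (simp add: g_def)
    then show "g (x + y) = g x + g y" by (metis g_def linear_add[OF lin])
    have "(0::real, - Di (c *\<^sub>R x)) = c *\<^sub>R (0, - Di x)"
      by (simp add: Di_def vec_eq_iff)
    then have "g (c *\<^sub>R x) = L (c *\<^sub>R (0, - Di x))"
      by (simp add: g_def)
    then show "g (c *\<^sub>R x) = c *\<^sub>R g x" by (metis g_def linear_scale[OF lin])
  qed
  define W where "W = matrix g"
  have Wv: "W *v z = g z" for z using lg by (simp add: W_def matrix_works_real)
  have Lred: "L (p, l) = L (0, l - vec p)" for p l
  proof -
    have e1: "(\<chi> f. p) = vec p" by (simp add: vec_eq_iff)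
    have e2: "(\<chi> f. (0::real)) = (0::real^'f)" by (simp add: vec_eq_iff)
    have "L (p, \<chi> f. p) = (\<chi> f. (0::real))" using lin_pres[of p 0] by simp
    then have z: "L (p, vec p) = 0" by (simp only: e1 e2)
    have "L (p, l) = L ((p, vec p) + (0, l - vec p))" by simp
    also have "\<dots> = L (p, vec p) + L (0, l - vec p)" by (rule linear_add[OF lin])
    finally show ?thesis using z by simp
  qed
  have C1: "L (p, l) = W *v (D *v (vec p - l))" for p l
    by (subst Lred) (simp add: Wv g_def DiD)
  have C2: "W ** Rmat \<sigma> fm xf xc = Nmat n K"
  proof (subst matrix_eq, intro allI)
    fix x :: "real^'d"
    have "Rmat \<sigma> fm xf xc *v x = D *v (vec (- (x \<bullet> xc)) - (\<chi> f. - (x \<bullet> xf f)))"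
      by (simp add: Rmat_mult Dv d_def vec_eq_iff inner_diff_left inner_commute algebra_simps)
    then have "(W ** Rmat \<sigma> fm xf xc) *v x = L (- (x \<bullet> xc), \<chi> f. - (x \<bullet> xf f))"
      by (simp add: C1 matrix_vector_mul_assoc[symmetric])
    also have "\<dots> = (\<chi> f. - (n f \<bullet> (K *v - x)))"
      using lin_pres[of 0 "- x"] by (simp add: inner_commute)
    also have "\<dots> = Nmat n K *v x"
      by (simp add: Nmat_mult vec_eq_iff mvneg)
    finally show "(W ** Rmat \<sigma> fm xf xc) *v x = Nmat n K *v x" .
  qed
  have Bf: "Bform \<sigma> fm L y x = (D *v (vec (fst y) - snd y)) \<bullet> L x" for y x
    by (simp add: Bform_def diag_diag vdiag Dv d_def mult_ac)
  define lz where "lz z = - Di z" for z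
  have Dlz: "D *v (vec 0 - lz z) = z" for z by (simp add: lz_def DDi)
  have Llz: "L (0, lz z) = W *v z" for z by (simp only: C1 Dlz)
  have Blz: "Bform \<sigma> fm L (0, lz z1) (0, lz z2) = z1 \<bullet> (W *v z2)" for z1 z2
    by (simp only: Bf Dlz Llz fst_conv snd_conv)
  show ?thesis
  proof (intro exI conjI impI allI)
    show "L (p, l) = W *v ((diag_mat fm ** diag_mat \<sigma>) *v (vec p - l))" for p l
      using C1 by (simp add: D_def)
    show "W ** Rmat \<sigma> fm xf xc = Nmat n K" by (rule C2)
    assume H: "(\<forall>y x. Bform \<sigma> fm L y x = Bform \<sigma> fm L x y)
             \<and> (\<forall>p l. vec p \<noteq> l \<longrightarrow> Bform \<sigma> fm L (p, l) (p, l) > 0)"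
    have Qs: "z1 \<bullet> (W *v z2) = z2 \<bullet> (W *v z1)" for z1 z2
    proof -
      have "Bform \<sigma> fm L (0, lz z1) (0, lz z2) = Bform \<sigma> fm L (0, lz z2) (0, lz z1)"
        using H by blast
      then show ?thesis by (simp only: Blz)
    qed
    have ent: "W $ i $ j = axis i 1 \<bullet> (W *v axis j 1)" for i j
      by (simp add: matrix_vector_mult_basis inner_axis' column_def)
    have Wsym: "transpose W = W"
    proof -
      have "transpose W $ i $ j = W $ i $ j" for i j
      proof -
        have "transpose W $ i $ j = W $ j $ i" by (simp add: transpose_def)
        also have "\<dots> = axis j 1 \<bullet> (W *v axis i 1)" by (rule ent)
        also have "\<dots> = axis i 1 \<bullet> (W *v axis j 1)" by (rule Qs)
        also have "\<dots> = W $ i $ j" by (rule ent[symmetric])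
        finally show ?thesis .
      qed
      then show ?thesis by (simp add: vec_eq_iff)
    qed
    have Wpos: "z \<bullet> (W *v z) > 0" if "z \<noteq> 0" for z
    proof -
      have "vec 0 \<noteq> lz z"
      proof
        assume "vec 0 = lz z"
        then have "z = D *v (vec 0 - vec 0)" using Dlz[of z] by simp
        then show False using that by simp
      qed
      then have "Bform \<sigma> fm L (0, lz z) (0, lz z) > 0" using H by blast
      then show ?thesis by (simp only: Blz)
    qed
    show spdW: "spd W" using Wsym Wpos by (simp add: spd_def)
    have ker: "\<forall>x. W *v x = 0 \<longrightarrow> x = 0"
    proof (intro allI impI)
      fix x assume "W *v x = 0"
      then show "x = 0" using Wpos[of x] by (cases "x = 0") auto
    qed
    then obtain B where B: "B ** W = mat 1" using matrix_left_invertible_ker by blast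
    then have B2: "W ** B = mat 1" using matrix_left_right_inverse by blast
    define M where "M = matrix_inv W"
    have MW: "W ** M = mat 1 \<and> M ** W = mat 1"
      unfolding M_def matrix_inv_def by (rule someI[where x=B]) (simp add: B B2)
    have WM: "W *v (M *v v) = v" for v
      using MW by (simp add: matrix_vector_mul_assoc)
    have TMW: "transpose M ** W = mat 1"
    proof -
      have "transpose M ** W = transpose M ** transpose W" by (simp only: Wsym)
      also have "\<dots> = transpose (W ** M)" by (simp only: matrix_transpose_mul)
      also have "\<dots> = mat 1" using MW by simp
      finally show ?thesis .
    qed
    have Msym: "transpose M = M"
    proof -
      have "transpose M = transpose M ** (W ** M)" using MW by (simp add: matrix_mul_rid)
      also have "\<dots> = (transpose M ** W) ** M" by (simp only: matrix_mul_assoc)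
      also have "\<dots> = M" using TMW by (simp add: matrix_mul_lid)
      finally show ?thesis .
    qed
    have Mpos: "v \<bullet> (M *v v) > 0" if "v \<noteq> 0" for v
    proof -
      have "M *v v \<noteq> 0" using WM[of v] that by (metis matrix_vector_mult_0_right)
      then have "(M *v v) \<bullet> (W *v (M *v v)) > 0" by (rule Wpos)
      then show ?thesis by (simp add: WM inner_commute)
    qed
    show "spd (matrix_inv W)" using Msym Mpos by (simp add: spd_def M_def[symmetric])
    show "matrix_inv W ** Nmat n K = Rmat \<sigma> fm xf xc"
    proof -
      have "M ** Nmat n K = M ** (W ** Rmat \<sigma> fm xf xc)" by (simp only: C2)
      also have "\<dots> = (M ** W) ** Rmat \<sigma> fm xf xc" by (simp only: matrix_mul_assoc)
      also have "\<dots> = Rmat \<sigma> fm xf xc" using MW by (simp add: matrix_mul_lid)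
      finally show ?thesis by (simp only: M_def)
    qed
    fix C1 C2 v
    assume HC: "0 < C1 \<and> C1 \<le> C2
                     \<and> (\<forall>p l. C1 * cm * (norm (L (p, l)))\<^sup>2 \<le> Bform \<sigma> fm L (p, l) (p, l)
                             \<and> Bform \<sigma> fm L (p, l) (p, l) \<le> C2 * cm * (norm (L (p, l)))\<^sup>2)"
    define z where "z = M *v v"
    have e1: "L (0, lz z) = v" using Llz WM z_def by simp
    have e2: "Bform \<sigma> fm L (0, lz z) (0, lz z) = v \<bullet> (matrix_inv W *v v)"
      using Blz WM by (simp add: z_def M_def[symmetric] inner_commute)
    have b1: "C1 * cm * (norm (L (0, lz z)))\<^sup>2 \<le> Bform \<sigma> fm L (0, lz z) (0, lz z)"
      and b2: "Bform \<sigma> fm L (0, lz z) (0, lz z) \<le> C2 * cm * (norm (L (0, lz z)))\<^sup>2"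
      using HC by blast+
    show "C1 * cm * (norm v)\<^sup>2 \<le> v \<bullet> (matrix_inv W *v v)"
      using b1 by (simp only: e1 e2)
    show "v \<bullet> (matrix_inv W *v v) \<le> C2 * cm * (norm v)\<^sup>2"
      using b2 by (simp only: e1 e2)
  qed
qed

end
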